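(* Let $A$ be an evolution algebra with natural basis $B=\{e_i:i\in\Lambda\}$ and structure matrix $(\omega_{ki})$. Then $M$ is a maximal modular ideal of $A$ if and only if $M=\mathrm{lin}\{e_i:i\in\Lambda\setminus\{i_0\}\}$ for some modular index $i_0\in\Lambda$, in which case $\frac{1}{\omega_{i_0i_0}}e_{i_0}$ is a modular unit for $M$.
   Context: An evolution algebra is an algebra $A$ over $\mathbb{K}\in\{\mathbb{R},\mathbb{C}\}$ with a basis $\{e_i:i\in\Lambda\}$ (natural basis) with $e_ie_j=0$ for $i\neq j$; write $e_j^2=\sum_k\omega_{kj}e_k$. An ideal $M$ is modular if some $u\in A$ (modular unit) satisfies $a-au\in M$ for all $a\in A$; a maximal modular ideal is a proper modular ideal maximal among proper modular ideals. An index $i_0$ is a modular index if $\omega_{i_0i_0}\neq0$ and $\omega_{i_0j}=0$ for all $j\neq i_0$. *)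

theory Defs
  imports Main "HOL-Analysis.Analysis"
begin

text \<open>Concrete model of an evolution algebra with natural basis indexed by the type 'i
  (the index set Lambda is UNIV :: 'i set) over a field 'k (real_normed_field: by
  Gelfand-Mazur exactly R or C). Elements are finitely supported coordinate
  functions; coordinate k of an element is its coefficient at e_k.
  The structure matrix is w, where e_j^2 = sum_k w k j e_k.\<close>

definition evo_carrier :: "('i \<Rightarrow> 'k::real_normed_field) set" where
  "evo_carrier = {x. finite {i. x i \<noteq> 0}}"

definition evo_basis :: "'i \<Rightarrow> ('i \<Rightarrow> 'k::real_normed_field)" where
  "evo_basis i = (\<lambda>j. if j = i then 1 else 0)"

definition evo_add :: "('i \<Rightarrow> 'k::real_normed_field) \<Rightarrow> ('i \<Rightarrow> 'k) \<Rightarrow> ('i \<Rightarrow> 'k)" where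
  "evo_add x y = (\<lambda>i. x i + y i)"

definition evo_scale :: "'k::real_normed_field \<Rightarrow> ('i \<Rightarrow> 'k) \<Rightarrow> ('i \<Rightarrow> 'k)" where
  "evo_scale c x = (\<lambda>i. c * x i)"

definition evo_diff :: "('i \<Rightarrow> 'k::real_normed_field) \<Rightarrow> ('i \<Rightarrow> 'k) \<Rightarrow> ('i \<Rightarrow> 'k)" where
  "evo_diff x y = (\<lambda>i. x i - y i)"

text \<open>Product: (sum_j x_j e_j)(sum_j y_j e_j) = sum_j x_j y_j e_j^2 = sum_k (sum_j x_j y_j w k j) e_k.\<close>
definition evo_mult :: "('i \<Rightarrow> 'i \<Rightarrow> 'k::real_normed_field) \<Rightarrow> ('i \<Rightarrow> 'k) \<Rightarrow> ('i \<Rightarrow> 'k) \<Rightarrow> ('i \<Rightarrow> 'k)" where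
  "evo_mult w x y = (\<lambda>k. \<Sum>j\<in>{j. x j \<noteq> 0 \<and> y j \<noteq> 0}. x j * y j * w k j)"

definition evo_structure :: "('i \<Rightarrow> 'i \<Rightarrow> 'k::real_normed_field) \<Rightarrow> bool" where
  "evo_structure w \<longleftrightarrow> (\<forall>j. finite {k. w k j \<noteq> 0})"

definition evo_ideal :: "('i \<Rightarrow> 'i \<Rightarrow> 'k::real_normed_field) \<Rightarrow> ('i \<Rightarrow> 'k) set \<Rightarrow> bool" where
  "evo_ideal w M \<longleftrightarrow> M \<subseteq> evo_carrier \<and> (\<lambda>_. 0) \<in> M \<and>
     (\<forall>x\<in>M. \<forall>y\<in>M. evo_add x y \<in> M) \<and>
     (\<forall>c. \<forall>x\<in>M. evo_scale c x \<in> M) \<and>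
     (\<forall>a\<in>evo_carrier. \<forall>m\<in>M. evo_mult w a m \<in> M \<and> evo_mult w m a \<in> M)"

definition evo_modular_unit :: "('i \<Rightarrow> 'i \<Rightarrow> 'k::real_normed_field) \<Rightarrow> ('i \<Rightarrow> 'k) set \<Rightarrow> ('i \<Rightarrow> 'k) \<Rightarrow> bool" where
  "evo_modular_unit w M u \<longleftrightarrow> u \<in> evo_carrier \<and>
     (\<forall>a\<in>evo_carrier. evo_diff a (evo_mult w a u) \<in> M)"

definition evo_modular_ideal :: "('i \<Rightarrow> 'i \<Rightarrow> 'k::real_normed_field) \<Rightarrow> ('i \<Rightarrow> 'k) set \<Rightarrow> bool" where
  "evo_modular_ideal w M \<longleftrightarrow> evo_ideal w M \<and> (\<exists>u. evo_modular_unit w M u)"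

definition evo_max_modular_ideal :: "('i \<Rightarrow> 'i \<Rightarrow> 'k::real_normed_field) \<Rightarrow> ('i \<Rightarrow> 'k) set \<Rightarrow> bool" where
  "evo_max_modular_ideal w M \<longleftrightarrow> evo_modular_ideal w M \<and> M \<noteq> evo_carrier \<and>
     (\<forall>N. evo_modular_ideal w N \<and> N \<noteq> evo_carrier \<and> M \<subseteq> N \<longrightarrow> N = M)"

definition evo_modular_index :: "('i \<Rightarrow> 'i \<Rightarrow> 'k::real_normed_field) \<Rightarrow> 'i \<Rightarrow> bool" where
  "evo_modular_index w i0 \<longleftrightarrow> w i0 i0 \<noteq> 0 \<and> (\<forall>j. j \<noteq> i0 \<longrightarrow> w i0 j = 0)"

definition evo_lin :: "'i set \<Rightarrow> ('i \<Rightarrow> 'k::real_normed_field) set" where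
  "evo_lin S = {x. \<exists>F c. finite F \<and> F \<subseteq> S \<and> x = (\<lambda>k. \<Sum>i\<in>F. c i * evo_basis i k)}"

end

theory Submission
  imports Defs
begin

lemma mult_F:
  assumes "finite F" "{j. x j \<noteq> 0} \<subseteq> F"
  shows "evo_mult w x y k = (\<Sum>j\<in>F. x j * y j * w k j)"
  unfolding evo_mult_def
  by (rule sum.mono_neutral_left) (use assms in auto)

lemma mult_basis: "evo_mult w (evo_basis j) y = (\<lambda>k. y j * w k j)"
proof
  fix k
  have "evo_mult w (evo_basis j) y k = (\<Sum>j'\<in>{j}. evo_basis j j' * y j' * w k j')"
    by (rule mult_F) (auto simp: evo_basis_def)
  then show "evo_mult w (evo_basis j) y k = y j * w k j" by (simp add: evo_basis_def)
qed

lemma mult_comm: "evo_mult w x y = evo_mult w y x"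
  unfolding evo_mult_def by (auto simp: conj_commute ac_simps)

lemma carrier_add: "x \<in> evo_carrier \<Longrightarrow> y \<in> evo_carrier \<Longrightarrow> evo_add x y \<in> evo_carrier"
  unfolding evo_carrier_def evo_add_def
  by (auto intro: finite_subset[of _ "{i. x i \<noteq> 0} \<union> {i. y i \<noteq> 0}"])

lemma carrier_scale: "x \<in> evo_carrier \<Longrightarrow> evo_scale c x \<in> evo_carrier"
  unfolding evo_carrier_def evo_scale_def
  by (auto intro: finite_subset[of _ "{i. x i \<noteq> 0}"])

lemma carrier_diff: "x \<in> evo_carrier \<Longrightarrow> y \<in> evo_carrier \<Longrightarrow> (\<lambda>k. x k - y k) \<in> evo_carrier"
  unfolding evo_carrier_def
  by (auto intro: finite_subset[of _ "{i. x i \<noteq> 0} \<union> {i. y i \<noteq> 0}"])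

lemma carrier_basis: "evo_basis i \<in> evo_carrier"
  unfolding evo_carrier_def evo_basis_def by auto

lemma carrier_zero: "(\<lambda>_. 0) \<in> evo_carrier"
  unfolding evo_carrier_def by auto

lemma carrier_mult:
  assumes "evo_structure w" "x \<in> evo_carrier"
  shows "evo_mult w x y \<in> evo_carrier"
proof -
  let ?F = "{j. x j \<noteq> 0}"
  have fF: "finite ?F" using assms(2) by (simp add: evo_carrier_def)
  have "{k. evo_mult w x y k \<noteq> 0} \<subseteq> (\<Union>j\<in>?F. {k. w k j \<noteq> 0})"
  proof
    fix k assume "k \<in> {k. evo_mult w x y k \<noteq> 0}"
    then have "(\<Sum>j\<in>?F. x j * y j * w k j) \<noteq> 0" using mult_F[OF fF, of x w y k] by simp
    then obtain j where "j \<in> ?F" "x j * y j * w k j \<noteq> 0" by (meson sum.neutral)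
    then show "k \<in> (\<Union>j\<in>?F. {k. w k j \<noteq> 0})" by auto
  qed
  moreover have "finite (\<Union>j\<in>?F. {k. w k j \<noteq> 0})"
    using fF assms(1) by (auto simp: evo_structure_def)
  ultimately show ?thesis unfolding evo_carrier_def by (auto intro: finite_subset)
qed

lemma lin_char: "evo_lin (UNIV - {i0}) = {x \<in> evo_carrier. x i0 = 0}"
proof (intro equalityI subsetI)
  fix x assume "x \<in> evo_lin (UNIV - {i0})"
  then obtain F c where F: "finite F" "F \<subseteq> UNIV - {i0}" "x = (\<lambda>k. \<Sum>i\<in>F. c i * evo_basis i k)"
    by (auto simp: evo_lin_def)
  have xk: "x k = (if k \<in> F then c k else 0)" for k
    using F by (simp add: evo_basis_def if_distrib[of "\<lambda>t. c _ * t"] cong: if_cong)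
  show "x \<in> {x \<in> evo_carrier. x i0 = 0}"
    using F(1,2) xk unfolding evo_carrier_def
    by (auto intro: finite_subset[of _ F] split: if_splits)
next
  fix x assume "x \<in> {x \<in> evo_carrier. x i0 = 0}"
  then have fx: "finite {j. x j \<noteq> 0}" and x0: "x i0 = 0" by (auto simp: evo_carrier_def)
  have "x = (\<lambda>k. \<Sum>i\<in>{j. x j \<noteq> 0}. x i * evo_basis i k)"
    using fx by (auto simp: evo_basis_def if_distrib[of "\<lambda>t. x _ * t"] cong: if_cong)
  then show "x \<in> evo_lin (UNIV - {i0})" unfolding evo_lin_def using fx x0 by blast
qed

lemma sum_closed:
  assumes z: "(\<lambda>_. 0) \<in> S" and a: "\<forall>x\<in>S. \<forall>y\<in>S. evo_add x y \<in> S"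
    and s: "\<forall>c. \<forall>x\<in>S. evo_scale c x \<in> S"
  shows "finite F \<Longrightarrow> (\<forall>j\<in>F. g j \<in> S) \<Longrightarrow> (\<lambda>k. \<Sum>j\<in>F. c j * g j k) \<in> S"
proof (induction F rule: finite_induct)
  case empty then show ?case using z by simp
next
  case (insert j F)
  have "(\<lambda>k. \<Sum>j\<in>insert j F. c j * g j k) = evo_add (evo_scale (c j) (g j)) (\<lambda>k. \<Sum>j\<in>F. c j * g j k)"
    using insert by (simp add: evo_add_def evo_scale_def)
  then show ?case using insert a s by simp
qed

lemma backward:
  fixes w :: "'i \<Rightarrow> 'i \<Rightarrow> 'k::real_normed_field" and M :: "('i \<Rightarrow> 'k) set"
  assumes ws: "evo_structure w" and mi: "evo_modular_index w i0"
    and MM: "M = {x \<in> evo_carrier. x i0 = 0}"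
  shows "evo_max_modular_ideal w M \<and>
         evo_modular_unit w M (evo_scale (1 / w i0 i0) (evo_basis i0))"
proof -
  have wii: "w i0 i0 \<noteq> 0" and wj: "\<And>j. j \<noteq> i0 \<Longrightarrow> w i0 j = 0"
    using mi by (auto simp: evo_modular_index_def)
  have prod0: "evo_mult w a m i0 = 0" if "a \<in> evo_carrier" "m \<in> M" for a m
  proof -
    have fa: "finite {j. a j \<noteq> 0}" using that by (simp add: evo_carrier_def)
    have "evo_mult w a m i0 = (\<Sum>j\<in>{j. a j \<noteq> 0}. a j * m j * w i0 j)"
      by (rule mult_F[OF fa]) simp
    also have "\<dots> = 0"
      by (rule sum.neutral) (use that MM wj in fastforce)
    finally show ?thesis .
  qed
  have ideal: "evo_ideal w M"
    unfolding evo_ideal_def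
  proof (intro conjI ballI allI)
    show "M \<subseteq> evo_carrier" using MM by auto
    show "(\<lambda>_. 0) \<in> M" using MM carrier_zero by auto
  next
    fix x y :: "'i \<Rightarrow> 'k" assume "x \<in> M" "y \<in> M"
    then show "evo_add x y \<in> M" using MM carrier_add by (auto simp: evo_add_def)
  next
    fix c and x :: "'i \<Rightarrow> 'k" assume "x \<in> M"
    then show "evo_scale c x \<in> M" using MM carrier_scale by (auto simp: evo_scale_def)
  next
    fix a m :: "'i \<Rightarrow> 'k" assume am: "a \<in> evo_carrier" "m \<in> M"
    then have mc: "m \<in> evo_carrier" using MM by auto
    show am': "evo_mult w a m \<in> M" using prod0[OF am] carrier_mult[OF ws am(1)] MM by auto
    show "evo_mult w m a \<in> M" using am' by (simp only: mult_comm[of w m a])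
  qed
  let ?u = "evo_scale (1 / w i0 i0) (evo_basis i0)"
  have unit: "evo_modular_unit w M ?u"
    unfolding evo_modular_unit_def
  proof (intro conjI ballI)
    show "?u \<in> evo_carrier" by (rule carrier_scale[OF carrier_basis])
    fix a :: "'i \<Rightarrow> 'k" assume a: "a \<in> evo_carrier"
    have fu: "finite {i0}" by simp
    have "evo_mult w ?u a k = (\<Sum>j\<in>{i0}. ?u j * a j * w k j)" for k
      by (rule mult_F[OF fu]) (auto simp: evo_scale_def evo_basis_def)
    then have ua: "evo_mult w a ?u k = 1 / w i0 i0 * a i0 * w k i0" for k
      using mult_comm[of w a ?u] by (simp add: evo_scale_def evo_basis_def)
    have uc: "evo_mult w a ?u \<in> evo_carrier"
      using carrier_mult[OF ws a] by simp
    show "evo_diff a (evo_mult w a ?u) \<in> M"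
      using carrier_diff[OF a uc] ua wii MM by (simp add: evo_diff_def)
  qed
  have notc: "M \<noteq> evo_carrier"
  proof
    assume "M = evo_carrier"
    then have "evo_basis i0 \<in> M" using carrier_basis[of i0] by simp
    then show False using MM by (simp add: evo_basis_def)
  qed
  have maxi: "N = M" if N: "evo_modular_ideal w N" "N \<noteq> evo_carrier" "M \<subseteq> N" for N
  proof (rule ccontr)
    assume "N \<noteq> M"
    have Nid: "evo_ideal w N" using N by (simp add: evo_modular_ideal_def)
    then have Nc: "N \<subseteq> evo_carrier" and Nadd: "\<forall>x\<in>N. \<forall>y\<in>N. evo_add x y \<in> N"
      and Nsc: "\<forall>c. \<forall>x\<in>N. evo_scale c x \<in> N" by (auto simp: evo_ideal_def)
    obtain x where x: "x \<in> N" "x \<notin> M" using \<open>N \<noteq> M\<close> N(3) by blast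
    then have xc: "x \<in> evo_carrier" and xi: "x i0 \<noteq> 0" using Nc MM by auto
    have "y \<in> N" if y: "y \<in> evo_carrier" for y
    proof -
      let ?c = "y i0 / x i0"
      let ?z = "\<lambda>k. y k - ?c * x k"
      have zc: "?z \<in> evo_carrier"
        using carrier_diff[OF y carrier_scale[OF xc, of ?c]] by (simp add: evo_scale_def)
      have "?z \<in> M" using zc xi MM by simp
      then have zN: "?z \<in> N" using N(3) by auto
      have "y = evo_add (evo_scale ?c x) ?z" by (simp add: evo_add_def evo_scale_def)
      then show ?thesis using Nadd Nsc x(1) zN by metis
    qed
    then show False using Nc N(2) by auto
  qed
  show ?thesis
    unfolding evo_max_modular_ideal_def evo_modular_ideal_def
    using ideal unit notc maxi unfolding evo_modular_ideal_def by blast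
qed

lemma forward:
  fixes w :: "'i \<Rightarrow> 'i \<Rightarrow> 'k::real_normed_field" and M :: "('i \<Rightarrow> 'k) set"
  assumes ws: "evo_structure w" and mx: "evo_max_modular_ideal w M"
  shows "\<exists>i. evo_modular_index w i \<and> M = {x \<in> evo_carrier. x i = 0}"
proof -
  have Mid: "evo_ideal w M" and Mne: "M \<noteq> evo_carrier"
    and Mmax: "\<And>N. evo_modular_ideal w N \<Longrightarrow> N \<noteq> evo_carrier \<Longrightarrow> M \<subseteq> N \<Longrightarrow> N = M"
    using mx unfolding evo_max_modular_ideal_def evo_modular_ideal_def by blast+
  obtain u where u: "evo_modular_unit w M u"
    using mx unfolding evo_max_modular_ideal_def evo_modular_ideal_def by blast
  have uc: "u \<in> evo_carrier" and uM: "\<And>a. a \<in> evo_carrier \<Longrightarrow> evo_diff a (evo_mult w a u) \<in> M"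
    using u unfolding evo_modular_unit_def by blast+
  have Mc: "M \<subseteq> evo_carrier" and M0: "(\<lambda>_. 0) \<in> M"
    and Madd: "\<forall>x\<in>M. \<forall>y\<in>M. evo_add x y \<in> M"
    and Msc: "\<forall>c. \<forall>x\<in>M. evo_scale c x \<in> M"
    and Mmul: "\<And>a m. a \<in> evo_carrier \<Longrightarrow> m \<in> M \<Longrightarrow> evo_mult w a m \<in> M"
    using Mid unfolding evo_ideal_def by blast+
  have "\<exists>i. evo_basis i \<notin> M"
  proof (rule ccontr)
    assume "\<not> ?thesis"
    then have allb: "\<forall>j. evo_basis j \<in> M" by simp
    obtain x where x: "x \<in> evo_carrier" "x \<notin> M" using Mne Mc by blast
    then have fx: "finite {j. x j \<noteq> 0}" by (simp add: evo_carrier_def)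
    have "x = (\<lambda>k. \<Sum>j\<in>{j. x j \<noteq> 0}. x j * evo_basis j k)"
      using fx by (auto simp: evo_basis_def if_distrib[of "\<lambda>t. x _ * t"] cong: if_cong)
    moreover have "(\<lambda>k. \<Sum>j\<in>{j. x j \<noteq> 0}. x j * evo_basis j k) \<in> M"
      by (rule sum_closed[OF M0 Madd Msc fx]) (use allb in auto)
    ultimately show False using x by simp
  qed
  then obtain i where ei: "evo_basis i \<notin> M" by blast
  define T where "T = (\<lambda>m. m i) ` M"
  have Tin: "m i \<in> T" if "m \<in> M" for m
    unfolding T_def using that by (rule imageI)
  have T0: "0 \<in> T" using Tin[OF M0] by simp
  have Tadd: "a + b \<in> T" if ab: "a \<in> T" "b \<in> T" for a b
  proof -
    obtain x where x: "x \<in> M" "a = x i" using ab(1) unfolding T_def by blast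
    obtain y where y: "y \<in> M" "b = y i" using ab(2) unfolding T_def by blast
    have "evo_add x y \<in> M" using Madd x(1) y(1) by blast
    then have "evo_add x y i \<in> T" by (rule Tin)
    then show ?thesis using x(2) y(2) by (simp add: evo_add_def)
  qed
  have Tsc: "c * a \<in> T" if aT: "a \<in> T" for a c
  proof -
    obtain x where x: "x \<in> M" "a = x i" using aT unfolding T_def by blast
    have "evo_scale c x \<in> M" using Msc x(1) by blast
    then have "evo_scale c x i \<in> T" by (rule Tin)
    then show ?thesis using x(2) by (simp add: evo_scale_def)
  qed
  have Tsum: "finite F \<Longrightarrow> (\<forall>j\<in>F. f j \<in> T) \<Longrightarrow> sum f F \<in> T" for F and f :: "'i \<Rightarrow> 'k"
  proof (induction F rule: finite_induct)
    case empty then show ?case using T0 by simp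
  next
    case (insert x F)
    then have "f x \<in> T" "sum f F \<in> T" by auto
    then have "f x + sum f F \<in> T" by (rule Tadd)
    then show ?case using insert(1,2) by simp
  qed
  have key1: "w i j \<in> T" if "j \<noteq> i" for j
  proof (cases "u j = 0")
    case True
    have "evo_diff (evo_basis j) (evo_mult w (evo_basis j) u) \<in> M"
      by (rule uM[OF carrier_basis])
    moreover have "evo_diff (evo_basis j) (evo_mult w (evo_basis j) u) = evo_basis j"
      using True unfolding mult_basis by (simp add: evo_diff_def)
    ultimately have "evo_basis j \<in> M" by simp
    then have "evo_mult w (evo_basis j) (evo_basis j) \<in> M" by (rule Mmul[OF carrier_basis])
    then have "evo_mult w (evo_basis j) (evo_basis j) i \<in> T" by (rule Tin)
    moreover have "evo_mult w (evo_basis j) (evo_basis j) i = w i j"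
      unfolding mult_basis by (simp add: evo_basis_def)
    ultimately show ?thesis by simp
  next
    case False
    have "evo_diff (evo_basis j) (evo_mult w (evo_basis j) u) \<in> M"
      by (rule uM[OF carrier_basis])
    then have "evo_scale (- 1 / u j) (evo_diff (evo_basis j) (evo_mult w (evo_basis j) u)) \<in> M"
      using Msc by blast
    then have "evo_scale (- 1 / u j) (evo_diff (evo_basis j) (evo_mult w (evo_basis j) u)) i \<in> T"
      by (rule Tin)
    moreover have "evo_scale (- 1 / u j) (evo_diff (evo_basis j) (evo_mult w (evo_basis j) u)) i = w i j"
      using False that unfolding mult_basis by (simp add: evo_diff_def evo_scale_def evo_basis_def)
    ultimately show ?thesis by simp
  qed
  define N where "N = {x \<in> evo_carrier. x i \<in> T}"
  have MN: "M \<subseteq> N" using Mc Tin unfolding N_def by auto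
  have multN: "evo_mult w a x \<in> N" if a: "a \<in> evo_carrier" and x: "x \<in> N" for a x
  proof -
    have fa: "finite {j. a j \<noteq> 0}" using a by (simp add: evo_carrier_def)
    have xc: "x \<in> evo_carrier" and xi: "x i \<in> T" using x by (auto simp: N_def)
    have eq: "evo_mult w a x i = (\<Sum>j\<in>{j. a j \<noteq> 0}. a j * x j * w i j)"
      by (rule mult_F[OF fa]) simp
    have "a j * x j * w i j \<in> T" for j
    proof (cases "j = i")
      case True
      obtain m where m: "m \<in> M" "m i = x i" using xi unfolding T_def by force
      have "evo_mult w (evo_basis i) m \<in> M" by (rule Mmul[OF carrier_basis m(1)])
      then have "evo_mult w (evo_basis i) m i \<in> T" by (rule Tin)
      moreover have "evo_mult w (evo_basis i) m i = x i * w i i" using m(2)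
        by (simp add: mult_basis)
      ultimately have "x i * w i i \<in> T" by simp
      then show ?thesis using True Tsc[of "x i * w i i" "a i"] by (simp add: mult.assoc)
    next
      case False
      then show ?thesis using key1 Tsc[of "w i j" "a j * x j"] by simp
    qed
    then have "evo_mult w a x i \<in> T" unfolding eq by (intro Tsum fa) auto
    then show ?thesis unfolding N_def using carrier_mult[OF ws a] by simp
  qed
  have Nid: "evo_ideal w N"
    unfolding evo_ideal_def
  proof (intro conjI ballI allI)
    show "N \<subseteq> evo_carrier" unfolding N_def by auto
    show "(\<lambda>_. 0) \<in> N" using MN M0 by auto
  next
    fix x y :: "'i \<Rightarrow> 'k" assume "x \<in> N" "y \<in> N"
    then show "evo_add x y \<in> N" using carrier_add Tadd unfolding N_def by (auto simp: evo_add_def)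
  next
    fix c and x :: "'i \<Rightarrow> 'k" assume "x \<in> N"
    then show "evo_scale c x \<in> N" using carrier_scale Tsc unfolding N_def by (auto simp: evo_scale_def)
  next
    fix a m :: "'i \<Rightarrow> 'k" assume am: "a \<in> evo_carrier" "m \<in> N"
    then have mc: "m \<in> evo_carrier" unfolding N_def by auto
    show am': "evo_mult w a m \<in> N" using multN[OF am] .
    show "evo_mult w m a \<in> N" using am' by (simp only: mult_comm[of w m a])
  qed
  have Nmod: "evo_modular_ideal w N"
    unfolding evo_modular_ideal_def evo_modular_unit_def using Nid uc uM MN by blast
  have biN: "evo_basis i \<notin> N"
  proof
    assume "evo_basis i \<in> N"
    then have "1 \<in> T" unfolding N_def by (simp add: evo_basis_def)
    then obtain m where m: "m \<in> M" "m i = 1" unfolding T_def by force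
    have "evo_mult w (evo_basis i) m \<in> M" by (rule Mmul[OF carrier_basis m(1)])
    then have sq: "(\<lambda>k. w k i) \<in> M" using m(2) by (simp add: mult_basis)
    have d: "evo_diff (evo_basis i) (evo_mult w (evo_basis i) u) \<in> M"
      by (rule uM[OF carrier_basis])
    have s: "evo_scale (u i) (\<lambda>k. w k i) \<in> M" using Msc sq by blast
    have "evo_basis i = evo_add (evo_diff (evo_basis i) (evo_mult w (evo_basis i) u)) (evo_scale (u i) (\<lambda>k. w k i))"
      unfolding mult_basis by (simp add: evo_add_def evo_diff_def evo_scale_def)
    then have "evo_basis i \<in> M" using Madd d s by metis
    then show False using ei by simp
  qed
  have Nne: "N \<noteq> evo_carrier" using biN carrier_basis[of i] by auto
  have NM: "N = M" by (rule Mmax[OF Nmod Nne MN])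
  have Meq: "M = {x \<in> evo_carrier. x i = 0}"
  proof (intro equalityI subsetI)
    fix x :: "'i \<Rightarrow> 'k" assume x: "x \<in> M"
    show "x \<in> {x \<in> evo_carrier. x i = 0}"
    proof (rule ccontr)
      assume "\<not> ?thesis"
      then have xi: "x i \<noteq> 0" using x Mc by auto
      have "x i \<in> T" using x by (rule Tin)
      then have "1 / x i * x i \<in> T" by (rule Tsc)
      then have "1 \<in> T" using xi by simp
      then have "evo_basis i \<in> N" unfolding N_def using carrier_basis[of i] by (simp add: evo_basis_def)
      then show False using biN by simp
    qed
  next
    fix x :: "'i \<Rightarrow> 'k" assume "x \<in> {x \<in> evo_carrier. x i = 0}"
    then have "x \<in> N" unfolding N_def using T0 by auto
    then show "x \<in> M" using NM by simp
  qed
  have "w i j = 0" if "j \<noteq> i" for j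
  proof -
    have "evo_basis j \<in> M" using Meq carrier_basis[of j] that by (simp add: evo_basis_def)
    then have "evo_mult w (evo_basis j) (evo_basis j) \<in> M" by (rule Mmul[OF carrier_basis])
    then show ?thesis using Meq unfolding mult_basis by (simp add: evo_basis_def)
  qed
  moreover have "w i i \<noteq> 0"
  proof
    assume wz: "w i i = 0"
    have "evo_diff (evo_basis i) (evo_mult w (evo_basis i) u) \<in> M"
      by (rule uM[OF carrier_basis])
    then show False using Meq wz unfolding mult_basis by (simp add: evo_diff_def evo_basis_def)
  qed
  ultimately show ?thesis using Meq unfolding evo_modular_index_def by blast
qed

theorem corollary3p12:
  fixes w :: "'i \<Rightarrow> 'i \<Rightarrow> 'k::real_normed_field" and M :: "('i \<Rightarrow> 'k) set"
  assumes "evo_structure w"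
  shows "(evo_max_modular_ideal w M \<longleftrightarrow>
            (\<exists>i0. evo_modular_index w i0 \<and> M = evo_lin (UNIV - {i0}))) \<and>
         (\<forall>i0. evo_modular_index w i0 \<and> M = evo_lin (UNIV - {i0}) \<longrightarrow>
            evo_modular_unit w M (evo_scale (1 / w i0 i0) (evo_basis i0)))"
proof (intro conjI allI impI iffI)
  assume "evo_max_modular_ideal w M"
  then obtain i where "evo_modular_index w i" "M = {x \<in> evo_carrier. x i = 0}"
    using forward[OF assms] by blast
  then show "\<exists>i0. evo_modular_index w i0 \<and> M = evo_lin (UNIV - {i0})"
    by (auto simp only: lin_char)
next
  assume "\<exists>i0. evo_modular_index w i0 \<and> M = evo_lin (UNIV - {i0})"
  then obtain i where i: "evo_modular_index w i" "M = {x \<in> evo_carrier. x i = 0}"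
    by (auto simp only: lin_char)
  show "evo_max_modular_ideal w M" using backward[OF assms i] by blast
next
  fix i0 assume "evo_modular_index w i0 \<and> M = evo_lin (UNIV - {i0})"
  then have i: "evo_modular_index w i0" "M = {x \<in> evo_carrier. x i0 = 0}"
    by (auto simp only: lin_char)
  show "evo_modular_unit w M (evo_scale (1 / w i0 i0) (evo_basis i0))"
    using backward[OF assms i] by blast
qed

end
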